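(* Let $n\ge2$, $\kappa\ge1$. The map $\psi:\mathbf S_n\to GL(n\kappa^n,\mathbb R)$ defined by $\psi(\sigma)=P_\sigma\otimes\mathrm{sgn}(\sigma)T_\sigma$ is a group homomorphism, i.e. $\psi(\mu\circ\sigma)=\psi(\mu)\psi(\sigma)$ for all $\mu,\sigma\in\mathbf S_n$; hence $\psi$ is a linear representation of $\mathbf S_n$ on $\mathcal G_{[n;\kappa]}\cong\mathbb R^{n\kappa^n}$.
   Context: $\delta_m^j$ is the $j$-th column of $I_m$, $\mathbf 1_m$ the all-ones column vector of length $m$. For $\sigma\in\mathbf S_n$, $P_\sigma=[\delta_n^{\sigma(1)},\dots,\delta_n^{\sigma(n)}]\in\mathbb R^{n\times n}$. For $i=1,\dots,n$, $\Phi_i=\mathbf 1_{\kappa^{i-1}}^T\otimes I_\kappa\otimes\mathbf 1_{\kappa^{n-i}}^T\in\mathbb R^{\kappa\times\kappa^n}$. The Khatri–Rao product of $A\in\mathbb R^{p\times m}$ and $B\in\mathbb R^{q\times m}$ is $A*B=[\mathrm{Col}_1(A)\otimes\mathrm{Col}_1(B),\dots,\mathrm{Col}_m(A)\otimes\mathrm{Col}_m(B)]$, and $T_\sigma=\Phi_{\sigma^{-1}(1)}*\cdots*\Phi_{\sigma^{-1}(n)}\in\mathbb R^{\kappa^n\times\kappa^n}$. $\mathcal G_{[n;\kappa]}$ (finite games with $n$ players each having $\kappa$ strategies) is identified with $\mathbb R^{n\kappa^n}$ via the structure vector $V_G=[V_1^c,\dots,V_n^c]$, where $c_i(x_1,\dots,x_n)=V_i^c(x_1\otimes\cdots\otimes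 x_n)$ with strategies $j$ identified with $\delta_\kappa^j$. *)

theory Defs
  imports "HOL-Combinatorics.Permutations" "Jordan_Normal_Form.Matrix"
begin

text \<open>Matrices are Jordan_Normal_Form matrices, indexed from 0. Permutations of
  the player set are functions nat to nat permuting {1..n}, as in the paper.\<close>

definition kron_mat :: "real mat \<Rightarrow> real mat \<Rightarrow> real mat" where
  "kron_mat A B = mat (dim_row A * dim_row B) (dim_col A * dim_col B)
     (\<lambda>(i, j). A $$ (i div dim_row B, j div dim_col B) * B $$ (i mod dim_row B, j mod dim_col B))"

definition khatri_rao :: "real mat \<Rightarrow> real mat \<Rightarrow> real mat" where
  "khatri_rao A B = mat (dim_row A * dim_row B) (dim_col A)
     (\<lambda>(i, j). A $$ (i div dim_row B, j) * B $$ (i mod dim_row B, j))"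

definition ones_row :: "nat \<Rightarrow> real mat" where
  "ones_row m = mat 1 m (\<lambda>_. 1)"

text \<open>Iterated Khatri-Rao product A_1 * ... * A_k of matrices with m columns;
  the 1 x m all-ones row is a neutral element, so for k >= 1 this is the usual product.\<close>
fun khatri_rao_list :: "nat \<Rightarrow> real mat list \<Rightarrow> real mat" where
  "khatri_rao_list m [] = ones_row m"
| "khatri_rao_list m (A # As) = khatri_rao A (khatri_rao_list m As)"

text \<open>P_sigma = [delta_n^{sigma(1)}, ..., delta_n^{sigma(n)}]: entry (i,j) (1-based) is 1 iff i = sigma(j).\<close>
definition perm_mat :: "nat \<Rightarrow> (nat \<Rightarrow> nat) \<Rightarrow> real mat" where
  "perm_mat n \<sigma> = mat n n (\<lambda>(i, j). if i + 1 = \<sigma> (j + 1) then 1 else 0)"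

definition Phi :: "nat \<Rightarrow> nat \<Rightarrow> nat \<Rightarrow> real mat" where
  "Phi n \<kappa> i = kron_mat (kron_mat (ones_row (\<kappa> ^ (i - 1))) (1\<^sub>m \<kappa>)) (ones_row (\<kappa> ^ (n - i)))"

definition T_mat :: "nat \<Rightarrow> nat \<Rightarrow> (nat \<Rightarrow> nat) \<Rightarrow> real mat" where
  "T_mat n \<kappa> \<sigma> = khatri_rao_list (\<kappa> ^ n) (map (\<lambda>k. Phi n \<kappa> (Hilbert_Choice.inv \<sigma> k)) [1..<n+1])"

definition psi :: "nat \<Rightarrow> nat \<Rightarrow> (nat \<Rightarrow> nat) \<Rightarrow> real mat" where
  "psi n \<kappa> \<sigma> = kron_mat (perm_mat n \<sigma>) (of_int (sign \<sigma>) \<cdot>\<^sub>m T_mat n \<kappa> \<sigma>)"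

end

theory Submission
  imports Defs
begin

lemma mod_digit:
  fixes \<kappa> i a b :: nat
  assumes "\<kappa> > 0" "b < a"
  shows "(i mod \<kappa> ^ a) div \<kappa> ^ b mod \<kappa> = i div \<kappa> ^ b mod \<kappa>"
proof -
  have e: "\<kappa> ^ a = \<kappa> ^ b * \<kappa> ^ (a - b)" using assms by (simp add: power_add[symmetric])
  have "i mod \<kappa> ^ a = \<kappa> ^ b * (i div \<kappa> ^ b mod \<kappa> ^ (a - b)) + i mod \<kappa> ^ b"
    unfolding e by (rule mod_mult2_eq)
  hence "(i mod \<kappa> ^ a) div \<kappa> ^ b = i div \<kappa> ^ b mod \<kappa> ^ (a - b)"
    using assms by simp
  moreover have "\<kappa> dvd \<kappa> ^ (a - b)" using assms by simp
  ultimately show ?thesis by (simp add: mod_mod_cancel)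
qed

lemma kron_mat_dims[simp]:
  "dim_row (kron_mat A B) = dim_row A * dim_row B"
  "dim_col (kron_mat A B) = dim_col A * dim_col B"
  by (auto simp: kron_mat_def)

lemma kron_mat_index:
  assumes "i < dim_row A * dim_row B" "j < dim_col A * dim_col B"
  shows "kron_mat A B $$ (i, j) = A $$ (i div dim_row B, j div dim_col B) * B $$ (i mod dim_row B, j mod dim_col B)"
  using assms by (simp add: kron_mat_def)

lemma lt_mult_helper:
  fixes p q b d :: nat
  assumes "p < b" "q < d"
  shows "p * d + q < b * d"
proof -
  have "p * d + q < (p + 1) * d" using assms by auto
  also have "\<dots> \<le> b * d" using assms by (intro mult_right_mono) auto
  finally show ?thesis .
qed

lemma sum_split_prod:
  fixes h :: "nat \<Rightarrow> real"
  assumes "d > 0"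
  shows "(\<Sum>t<b * d. h t) = (\<Sum>p<b. \<Sum>q<d. h (p * d + q))"
proof -
  have "(\<Sum>t<b * d. h t) = (\<Sum>pq\<in>{..<b} \<times> {..<d}. h (fst pq * d + snd pq))"
    apply (rule sum.reindex_bij_witness[where i = "\<lambda>pq. fst pq * d + snd pq" and j = "\<lambda>t. (t div d, t mod d)"])
    using assms by (auto simp: lt_mult_helper less_mult_imp_div_less)
  also have "\<dots> = (\<Sum>p<b. \<Sum>q<d. h (p * d + q))"
    by (simp add: sum.cartesian_product split_beta)
  finally show ?thesis .
qed

lemma kron_mult:
  assumes A: "A \<in> carrier_mat a b" and B: "B \<in> carrier_mat c d"
    and C: "C \<in> carrier_mat b e" and D: "D \<in> carrier_mat d f" and d: "d > 0"
  shows "kron_mat A B * kron_mat C D = kron_mat (A * C) (B * D)"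
proof (rule eq_matI)
  fix i j assume i: "i < dim_row (kron_mat (A * C) (B * D))" and j: "j < dim_col (kron_mat (A * C) (B * D))"
  have i': "i < a * c" and j': "j < e * f" using i j A B C D by auto
  have c0: "c > 0" using i' by (cases c) auto
  have f0: "f > 0" using j' by (cases f) auto
  have id: "i div c < a" "j div f < e" using i' j' c0 f0 by (auto simp: less_mult_imp_div_less)
  have im: "i mod c < c" "j mod f < f" using c0 f0 by auto
  have "(kron_mat A B * kron_mat C D) $$ (i, j) =
      (\<Sum>t<b * d. kron_mat A B $$ (i, t) * kron_mat C D $$ (t, j))"
    using i' j' A B C D by (simp add: index_mult_mat scalar_prod_def row_def col_def sum.atLeast0_lessThan_Suc lessThan_atLeast0)
  also have "\<dots> = (\<Sum>p<b. \<Sum>q<d. kron_mat A B $$ (i, p * d + q) * kron_mat C D $$ (p * d + q, j))"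
    by (rule sum_split_prod[OF d])
  also have "\<dots> = (\<Sum>p<b. \<Sum>q<d. (A $$ (i div c, p) * C $$ (p, j div f)) * (B $$ (i mod c, q) * D $$ (q, j mod f)))"
  proof (intro sum.cong refl)
    fix p q assume p: "p \<in> {..<b}" and q: "q \<in> {..<d}"
    have "p * d + q < (p + 1) * d" using q by auto
    also have "\<dots> \<le> b * d" using p by (intro mult_right_mono) auto
    finally have pq: "p * d + q < b * d" .
    have "(p * d + q) div d = p" "(p * d + q) mod d = q" using q d by auto
    then show "kron_mat A B $$ (i, p * d + q) * kron_mat C D $$ (p * d + q, j) =
       (A $$ (i div c, p) * C $$ (p, j div f)) * (B $$ (i mod c, q) * D $$ (q, j mod f))"
      using i' j' pq A B C D by (simp add: kron_mat_index)
  qed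
  also have "\<dots> = (\<Sum>p<b. A $$ (i div c, p) * C $$ (p, j div f)) * (\<Sum>q<d. B $$ (i mod c, q) * D $$ (q, j mod f))"
    by (simp add: sum_product)
  also have "\<dots> = (A * C) $$ (i div c, j div f) * (B * D) $$ (i mod c, j mod f)"
    using id im A B C D by (simp add: index_mult_mat scalar_prod_def row_def col_def lessThan_atLeast0)
  also have "\<dots> = kron_mat (A * C) (B * D) $$ (i, j)"
    using i' j' A B C D by (simp add: kron_mat_index)
  finally show "(kron_mat A B * kron_mat C D) $$ (i, j) = kron_mat (A * C) (B * D) $$ (i, j)" .
qed (use A B C D in auto)


lemma ones_row_carrier: "ones_row m \<in> carrier_mat 1 m" by (simp add: ones_row_def)

lemma khatri_rao_dims[simp]:
  "dim_row (khatri_rao A B) = dim_row A * dim_row B" "dim_col (khatri_rao A B) = dim_col A"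
  by (auto simp: khatri_rao_def)

lemma krl:
  assumes "\<forall>A\<in>set As. A \<in> carrier_mat \<kappa> m" "\<kappa> > 0"
  shows "khatri_rao_list m As \<in> carrier_mat (\<kappa> ^ length As) m \<and>
    (\<forall>i<\<kappa> ^ length As. \<forall>j<m. khatri_rao_list m As $$ (i, j) =
       (\<Prod>k<length As. (As ! k) $$ (i div \<kappa> ^ (length As - 1 - k) mod \<kappa>, j)))"
  using assms(1)
proof (induction As)
  case Nil
  then show ?case by (simp add: ones_row_def)
next
  case (Cons A As)
  let ?L = "length As"
  let ?R = "khatri_rao_list m As"
  have A: "A \<in> carrier_mat \<kappa> m" using Cons.prems by auto
  have IH: "?R \<in> carrier_mat (\<kappa> ^ ?L) m"
    "\<And>i j. i < \<kappa> ^ ?L \<Longrightarrow> j < m \<Longrightarrow> ?R $$ (i, j) = (\<Prod>k<?L. (As ! k) $$ (i div \<kappa> ^ (?L - 1 - k) mod \<kappa>, j))"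
    using Cons by auto
  have car: "khatri_rao_list m (A # As) \<in> carrier_mat (\<kappa> ^ length (A # As)) m"
  proof -
    have "dim_row A = \<kappa>" "dim_col A = m" "dim_row ?R = \<kappa> ^ ?L" using A IH(1) by auto
    then show ?thesis unfolding carrier_mat_def by simp
  qed
  moreover have "khatri_rao_list m (A # As) $$ (i, j) =
       (\<Prod>k<length (A # As). ((A # As) ! k) $$ (i div \<kappa> ^ (length (A # As) - 1 - k) mod \<kappa>, j))"
    if i: "i < \<kappa> ^ length (A # As)" and j: "j < m" for i j
  proof -
    have pos: "\<kappa> ^ ?L > 0" using assms by simp
    have i': "i < \<kappa> * \<kappa> ^ ?L" using i by simp
    have d1: "i div \<kappa> ^ ?L < \<kappa>" using i' by (rule less_mult_imp_div_less)
    have m1: "i mod \<kappa> ^ ?L < \<kappa> ^ ?L" using pos by simp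
    have s1: "khatri_rao_list m (A # As) $$ (i, j) = A $$ (i div \<kappa> ^ ?L, j) * ?R $$ (i mod \<kappa> ^ ?L, j)"
      using i j A IH(1) by (simp add: khatri_rao_def)
    have s2: "?R $$ (i mod \<kappa> ^ ?L, j) = (\<Prod>k<?L. (As ! k) $$ ((i mod \<kappa> ^ ?L) div \<kappa> ^ (?L - 1 - k) mod \<kappa>, j))"
      by (rule IH(2)[OF m1 j])
    have s3: "\<dots> = (\<Prod>k<?L. (As ! k) $$ (i div \<kappa> ^ (?L - 1 - k) mod \<kappa>, j))"
    proof (rule prod.cong[OF refl])
      fix k assume "k \<in> {..<?L}"
      then have "?L - 1 - k < ?L" by auto
      then show "(As ! k) $$ ((i mod \<kappa> ^ ?L) div \<kappa> ^ (?L - 1 - k) mod \<kappa>, j) = (As ! k) $$ (i div \<kappa> ^ (?L - 1 - k) mod \<kappa>, j)"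
        by (simp only: mod_digit[OF assms(2)])
    qed
    have s4: "A $$ (i div \<kappa> ^ ?L, j) = A $$ (i div \<kappa> ^ ?L mod \<kappa>, j)" using d1 by simp
    have s5: "A $$ (i div \<kappa> ^ ?L mod \<kappa>, j) * (\<Prod>k<?L. (As ! k) $$ (i div \<kappa> ^ (?L - 1 - k) mod \<kappa>, j))
       = (\<Prod>k<Suc ?L. ((A # As) ! k) $$ (i div \<kappa> ^ (Suc ?L - 1 - k) mod \<kappa>, j))"
      by (simp only: prod.lessThan_Suc_shift) simp
    have "khatri_rao_list m (A # As) $$ (i, j) = (\<Prod>k<Suc ?L. ((A # As) ! k) $$ (i div \<kappa> ^ (Suc ?L - 1 - k) mod \<kappa>, j))"
      by (simp only: s1 s2 s3 s4 s5)
    then show ?thesis by simp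
  qed
  ultimately show ?case by blast
qed

lemma Phi_props:
  assumes "1 \<le> i" "i \<le> n" "\<kappa> > 0"
  shows "Phi n \<kappa> i \<in> carrier_mat \<kappa> (\<kappa> ^ n)"
    "r < \<kappa> \<Longrightarrow> c < \<kappa> ^ n \<Longrightarrow> Phi n \<kappa> i $$ (r, c) = (if r = c div \<kappa> ^ (n - i) mod \<kappa> then 1 else 0)"
proof -
  have e1: "\<kappa> ^ (i - Suc 0) * \<kappa> = \<kappa> ^ i" using assms(1) by (cases i) (auto simp: mult.commute)
  have e3: "\<kappa> ^ i * \<kappa> ^ (n - i) = \<kappa> ^ n" using assms(2) by (simp add: power_add[symmetric])
  show "Phi n \<kappa> i \<in> carrier_mat \<kappa> (\<kappa> ^ n)"
    unfolding Phi_def carrier_mat_def ones_row_def by (simp add: e1 e3)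
  assume r: "r < \<kappa>" and c: "c < \<kappa> ^ n"
  have cd: "c div \<kappa> ^ (n - i) < \<kappa> ^ i"
    using c e3 by (metis less_mult_imp_div_less)
  have cd2: "c div \<kappa> ^ (n - i) div \<kappa> < \<kappa> ^ (i - Suc 0)"
    using cd e1 by (metis less_mult_imp_div_less)
  have "Phi n \<kappa> i $$ (r, c) = (if r mod \<kappa> = c div \<kappa> ^ (n - i) mod \<kappa> then 1 else 0)"
    unfolding Phi_def using r c cd cd2 by (simp add: kron_mat_index ones_row_def e1 e3)
  then show "Phi n \<kappa> i $$ (r, c) = (if r = c div \<kappa> ^ (n - i) mod \<kappa> then 1 else 0)"
    using r by simp
qed


definition dig :: "nat \<Rightarrow> nat \<Rightarrow> nat \<Rightarrow> nat" where
  "dig \<kappa> j x = x div \<kappa> ^ j mod \<kappa>"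

lemma dig_Suc: "dig \<kappa> (Suc j) x = dig \<kappa> j (x div \<kappa>)"
  by (simp add: dig_def div_mult2_eq)

lemma dig_inj:
  assumes "x < \<kappa> ^ n" "y < \<kappa> ^ n" "\<forall>j<n. dig \<kappa> j x = dig \<kappa> j y"
  shows "x = y"
  using assms
proof (induction n arbitrary: x y)
  case 0 then show ?case by simp
next
  case (Suc n)
  have k: "\<kappa> > 0" using Suc.prems(1) by (cases \<kappa>) auto
  have "x div \<kappa> < \<kappa> ^ n" "y div \<kappa> < \<kappa> ^ n" using Suc.prems
    by (auto simp: less_mult_imp_div_less mult.commute)
  moreover have "\<forall>j<n. dig \<kappa> j (x div \<kappa>) = dig \<kappa> j (y div \<kappa>)"
    using Suc.prems(3) by (auto simp: dig_Suc[symmetric])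
  ultimately have "x div \<kappa> = y div \<kappa>" using Suc.IH by blast
  moreover have "x mod \<kappa> = y mod \<kappa>" using Suc.prems(3)[rule_format, of 0] by (simp add: dig_def)
  ultimately show ?case by (metis div_mult_mod_eq)
qed

fun num :: "nat \<Rightarrow> (nat \<Rightarrow> nat) \<Rightarrow> nat \<Rightarrow> nat" where
  "num \<kappa> a 0 = 0"
| "num \<kappa> a (Suc n) = a 0 + \<kappa> * num \<kappa> (\<lambda>j. a (Suc j)) n"

lemma num_props:
  assumes "\<forall>j<n. a j < \<kappa>"
  shows "num \<kappa> a n < \<kappa> ^ n \<and> (\<forall>j<n. dig \<kappa> j (num \<kappa> a n) = a j)"
  using assms
proof (induction n arbitrary: a)
  case 0 then show ?case by simp
next
  case (Suc n)
  let ?y = "num \<kappa> (\<lambda>j. a (Suc j)) n"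
  have IH: "?y < \<kappa> ^ n" "\<forall>j<n. dig \<kappa> j ?y = a (Suc j)" using Suc by auto
  have a0: "a 0 < \<kappa>" using Suc.prems by auto
  have "a 0 + \<kappa> * ?y < \<kappa> + \<kappa> * ?y" using a0 by simp
  also have "\<dots> = \<kappa> * (?y + 1)" by simp
  also have "\<dots> \<le> \<kappa> * \<kappa> ^ n" using IH(1) by (intro mult_left_mono) auto
  finally have b: "num \<kappa> a (Suc n) < \<kappa> ^ Suc n" by simp
  have dv: "(a 0 + \<kappa> * ?y) div \<kappa> = ?y" using a0 by simp
  have "dig \<kappa> j (num \<kappa> a (Suc n)) = a j" if j: "j < Suc n" for j
  proof (cases j)
    case 0 then show ?thesis using a0 by (simp add: dig_def)
  next
    case (Suc j') then show ?thesis using IH(2) j dv by (simp add: dig_Suc)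
  qed
  then show ?case using b by blast
qed

lemma prod_indicator:
  assumes "finite K"
  shows "(\<Prod>k\<in>K. (if P k then 1 else 0 :: real)) = (if \<forall>k\<in>K. P k then 1 else 0)"
  using assms by (induction K rule: finite_induct) auto

definition tau :: "nat \<Rightarrow> (nat \<Rightarrow> nat) \<Rightarrow> nat \<Rightarrow> nat" where
  "tau n \<sigma> j = n - Hilbert_Choice.inv \<sigma> (n - j)"

lemma T_props:
  assumes p: "\<sigma> permutes {1..n}" and k: "\<kappa> > 0"
  shows "T_mat n \<kappa> \<sigma> \<in> carrier_mat (\<kappa> ^ n) (\<kappa> ^ n)"
    "r < \<kappa> ^ n \<Longrightarrow> c < \<kappa> ^ n \<Longrightarrow>
      T_mat n \<kappa> \<sigma> $$ (r, c) = (if \<forall>j<n. dig \<kappa> j r = dig \<kappa> (tau n \<sigma> j) c then 1 else 0)"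
proof -
  let ?As = "map (\<lambda>k. Phi n \<kappa> (Hilbert_Choice.inv \<sigma> k)) [1..<n+1]"
  have pi: "Hilbert_Choice.inv \<sigma> permutes {1..n}" using p by (rule permutes_inv)
  have rng: "1 \<le> Hilbert_Choice.inv \<sigma> k \<and> Hilbert_Choice.inv \<sigma> k \<le> n" if "1 \<le> k" "k \<le> n" for k
    using permutes_in_image[OF pi, of k] that by auto
  have car: "\<forall>A\<in>set ?As. A \<in> carrier_mat \<kappa> (\<kappa> ^ n)"
    using rng Phi_props(1)[OF _ _ k] by auto
  have len: "length ?As = n" by simp
  note K = krl[OF car k, unfolded len]
  show "T_mat n \<kappa> \<sigma> \<in> carrier_mat (\<kappa> ^ n) (\<kappa> ^ n)"
    using K unfolding T_mat_def by blast
  assume r: "r < \<kappa> ^ n" and c: "c < \<kappa> ^ n"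
  have "T_mat n \<kappa> \<sigma> $$ (r, c) = (\<Prod>k<n. (?As ! k) $$ (r div \<kappa> ^ (n - 1 - k) mod \<kappa>, c))"
    using K r c unfolding T_mat_def by blast
  also have "\<dots> = (\<Prod>k<n. (if dig \<kappa> (n - 1 - k) r = dig \<kappa> (n - Hilbert_Choice.inv \<sigma> (k + 1)) c then 1 else 0))"
  proof (rule prod.cong[OF refl])
    fix k assume "k \<in> {..<n}"
    then have kk: "k < n" by simp
    have "?As ! k = Phi n \<kappa> (Hilbert_Choice.inv \<sigma> (k + 1))" using kk by (simp del: upt_Suc)
    moreover have "r div \<kappa> ^ (n - 1 - k) mod \<kappa> < \<kappa>" using k by simp
    ultimately show "(?As ! k) $$ (r div \<kappa> ^ (n - 1 - k) mod \<kappa>, c) =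
       (if dig \<kappa> (n - 1 - k) r = dig \<kappa> (n - Hilbert_Choice.inv \<sigma> (k + 1)) c then 1 else 0)"
      using Phi_props(2)[OF _ _ k _ c] rng[of "k+1"] kk by (simp add: dig_def)
  qed
  also have "\<dots> = (if \<forall>k<n. dig \<kappa> (n - 1 - k) r = dig \<kappa> (n - Hilbert_Choice.inv \<sigma> (k + 1)) c then 1 else 0)"
    by (simp add: prod_indicator)
  also have "(\<forall>k<n. dig \<kappa> (n - 1 - k) r = dig \<kappa> (n - Hilbert_Choice.inv \<sigma> (k + 1)) c) \<longleftrightarrow>
      (\<forall>j<n. dig \<kappa> j r = dig \<kappa> (tau n \<sigma> j) c)"
  proof
    assume H: "\<forall>k<n. dig \<kappa> (n - 1 - k) r = dig \<kappa> (n - Hilbert_Choice.inv \<sigma> (k + 1)) c"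
    show "\<forall>j<n. dig \<kappa> j r = dig \<kappa> (tau n \<sigma> j) c"
    proof (intro allI impI)
      fix j assume j: "j < n"
      have "n - 1 - (n - 1 - j) = j" "n - 1 - j + 1 = n - j" using j by auto
      then show "dig \<kappa> j r = dig \<kappa> (tau n \<sigma> j) c" using H[rule_format, of "n - 1 - j"] j
        by (simp add: tau_def)
    qed
  next
    assume H: "\<forall>j<n. dig \<kappa> j r = dig \<kappa> (tau n \<sigma> j) c"
    show "\<forall>k<n. dig \<kappa> (n - 1 - k) r = dig \<kappa> (n - Hilbert_Choice.inv \<sigma> (k + 1)) c"
    proof (intro allI impI)
      fix k assume k: "k < n"
      have "n - (n - 1 - k) = k + 1" using k by auto
      then show "dig \<kappa> (n - 1 - k) r = dig \<kappa> (n - Hilbert_Choice.inv \<sigma> (k + 1)) c" using H[rule_format, of "n - 1 - k"] k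
        by (simp add: tau_def)
    qed
  qed
  finally show "T_mat n \<kappa> \<sigma> $$ (r, c) = (if \<forall>j<n. dig \<kappa> j r = dig \<kappa> (tau n \<sigma> j) c then 1 else 0)" .
qed


lemma tau_lt:
  assumes p: "\<sigma> permutes {1..n}" and j: "j < n"
  shows "tau n \<sigma> j < n"
proof -
  have "Hilbert_Choice.inv \<sigma> (n - j) \<in> {1..n}"
    using permutes_in_image[OF permutes_inv[OF p], of "n - j"] j by auto
  then show ?thesis unfolding tau_def by auto
qed

lemma tau_comp:
  assumes p: "\<mu> permutes {1..n}" "\<sigma> permutes {1..n}" and j: "j < n"
  shows "tau n (\<mu> \<circ> \<sigma>) j = tau n \<sigma> (tau n \<mu> j)"
proof -
  have iv: "Hilbert_Choice.inv (\<mu> \<circ> \<sigma>) = Hilbert_Choice.inv \<sigma> \<circ> Hilbert_Choice.inv \<mu>"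
    using p by (intro o_inv_distrib) (auto simp: permutes_bij)
  have "Hilbert_Choice.inv \<mu> (n - j) \<in> {1..n}"
    using permutes_in_image[OF permutes_inv[OF p(1)], of "n - j"] j by auto
  then have "n - (n - Hilbert_Choice.inv \<mu> (n - j)) = Hilbert_Choice.inv \<mu> (n - j)" by auto
  then show ?thesis unfolding tau_def iv by simp
qed

lemma T_comp:
  assumes p: "\<mu> permutes {1..n}" "\<sigma> permutes {1..n}" and k: "\<kappa> > 0"
  shows "T_mat n \<kappa> (\<mu> \<circ> \<sigma>) = T_mat n \<kappa> \<mu> * T_mat n \<kappa> \<sigma>"
proof -
  have pms: "\<mu> \<circ> \<sigma> permutes {1..n}" by (rule permutes_compose[OF p(2) p(1)])
  note Tm = T_props[OF p(1) k] and Ts = T_props[OF p(2) k] and Tms = T_props[OF pms k]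
  show ?thesis
  proof (rule eq_matI)
    fix r c assume "r < dim_row (T_mat n \<kappa> \<mu> * T_mat n \<kappa> \<sigma>)" "c < dim_col (T_mat n \<kappa> \<mu> * T_mat n \<kappa> \<sigma>)"
    then have r: "r < \<kappa> ^ n" and c: "c < \<kappa> ^ n" using Tm(1) Ts(1) by auto
    define s0 where "s0 = num \<kappa> (\<lambda>j. dig \<kappa> (tau n \<sigma> j) c) n"
    have N: "s0 < \<kappa> ^ n" "\<forall>j<n. dig \<kappa> j s0 = dig \<kappa> (tau n \<sigma> j) c"
      using num_props[of n "\<lambda>j. dig \<kappa> (tau n \<sigma> j) c" \<kappa>] k unfolding s0_def by (auto simp: dig_def)
    have Ts0: "T_mat n \<kappa> \<sigma> $$ (s, c) = (if s = s0 then 1 else 0)" if s: "s < \<kappa> ^ n" for s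
    proof -
      have "(\<forall>j<n. dig \<kappa> j s = dig \<kappa> (tau n \<sigma> j) c) \<longleftrightarrow> s = s0"
        using dig_inj[OF s N(1)] N(2) by auto
      then show ?thesis using Ts(2)[OF s c] by simp
    qed
    have "(T_mat n \<kappa> \<mu> * T_mat n \<kappa> \<sigma>) $$ (r, c) = (\<Sum>s<\<kappa> ^ n. T_mat n \<kappa> \<mu> $$ (r, s) * T_mat n \<kappa> \<sigma> $$ (s, c))"
      using r c Tm(1) Ts(1) by (simp add: index_mult_mat scalar_prod_def row_def col_def lessThan_atLeast0)
    also have "\<dots> = (\<Sum>s<\<kappa> ^ n. T_mat n \<kappa> \<mu> $$ (r, s) * (if s = s0 then 1 else 0))"
      using Ts0 by (intro sum.cong) auto
    also have "\<dots> = T_mat n \<kappa> \<mu> $$ (r, s0)"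
      using N(1) by (simp add: if_distrib[of "\<lambda>x. _ * x"] sum.delta' cong: if_cong)
    also have "\<dots> = (if \<forall>j<n. dig \<kappa> j r = dig \<kappa> (tau n \<mu> j) s0 then 1 else 0)"
      using Tm(2)[OF r N(1)] .
    also have "(\<forall>j<n. dig \<kappa> j r = dig \<kappa> (tau n \<mu> j) s0) \<longleftrightarrow> (\<forall>j<n. dig \<kappa> j r = dig \<kappa> (tau n (\<mu> \<circ> \<sigma>) j) c)"
      using N(2) tau_lt[OF p(1)] tau_comp[OF p] by auto
    also have "(if \<forall>j<n. dig \<kappa> j r = dig \<kappa> (tau n (\<mu> \<circ> \<sigma>) j) c then 1 else 0) = T_mat n \<kappa> (\<mu> \<circ> \<sigma>) $$ (r, c)"
      using Tms(2)[OF r c] by simp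
    finally show "T_mat n \<kappa> (\<mu> \<circ> \<sigma>) $$ (r, c) = (T_mat n \<kappa> \<mu> * T_mat n \<kappa> \<sigma>) $$ (r, c)" by simp
  qed (use Tm(1) Ts(1) Tms(1) in auto)
qed

lemma T_id:
  assumes k: "\<kappa> > 0"
  shows "T_mat n \<kappa> id = 1\<^sub>m (\<kappa> ^ n)"
proof -
  have p: "id permutes {1..n}" by (rule permutes_id)
  note T = T_props[OF p k]
  show ?thesis
  proof (rule eq_matI)
    fix r c assume "r < dim_row (1\<^sub>m (\<kappa> ^ n) :: real mat)" "c < dim_col (1\<^sub>m (\<kappa> ^ n) :: real mat)"
    then have r: "r < \<kappa> ^ n" and c: "c < \<kappa> ^ n" by auto
    have tj: "tau n id j = j" if "j < n" for j using that by (simp add: tau_def inv_id)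
    have "(\<forall>j<n. dig \<kappa> j r = dig \<kappa> (tau n id j) c) \<longleftrightarrow> r = c"
      using dig_inj[OF r c] tj by auto
    then show "T_mat n \<kappa> id $$ (r, c) = 1\<^sub>m (\<kappa> ^ n) $$ (r, c)" using T(2)[OF r c] r c by simp
  qed (use T(1) in auto)
qed

lemma perm_mat_carrier: "perm_mat n \<sigma> \<in> carrier_mat n n" by (simp add: perm_mat_def)

lemma perm_mat_comp:
  assumes p: "\<mu> permutes {1..n}" "\<sigma> permutes {1..n}"
  shows "perm_mat n (\<mu> \<circ> \<sigma>) = perm_mat n \<mu> * perm_mat n \<sigma>"
proof (rule eq_matI)
  fix i j assume "i < dim_row (perm_mat n \<mu> * perm_mat n \<sigma>)" "j < dim_col (perm_mat n \<mu> * perm_mat n \<sigma>)"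
  then have i: "i < n" and j: "j < n" by (auto simp: perm_mat_def)
  have sj: "\<sigma> (j + 1) \<in> {1..n}" using permutes_in_image[OF p(2), of "j+1"] j by auto
  define k0 where "k0 = \<sigma> (j + 1) - 1"
  have k0: "k0 < n" "k0 + 1 = \<sigma> (j + 1)" using sj unfolding k0_def by auto
  have "(perm_mat n \<mu> * perm_mat n \<sigma>) $$ (i, j) =
      (\<Sum>k<n. (if i + 1 = \<mu> (k + 1) then 1 else 0) * (if k + 1 = \<sigma> (j + 1) then 1 else (0::real)))"
    using i j by (simp add: perm_mat_def index_mult_mat scalar_prod_def row_def col_def lessThan_atLeast0)
  also have "\<dots> = (\<Sum>k<n. (if i + 1 = \<mu> (k + 1) then 1 else 0) * (if k = k0 then 1 else (0::real)))"
    using k0 by (intro sum.cong refl) auto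
  also have "\<dots> = (if i + 1 = \<mu> (k0 + 1) then 1 else 0)"
    using k0(1) by (simp add: if_distrib[of "\<lambda>x. _ * x"] sum.delta' cong: if_cong)
  also have "\<dots> = perm_mat n (\<mu> \<circ> \<sigma>) $$ (i, j)"
    using i j k0 by (simp add: perm_mat_def)
  finally show "perm_mat n (\<mu> \<circ> \<sigma>) $$ (i, j) = (perm_mat n \<mu> * perm_mat n \<sigma>) $$ (i, j)" by simp
qed (auto simp: perm_mat_def)

lemma perm_mat_id: "perm_mat n id = 1\<^sub>m n"
  by (rule eq_matI) (auto simp: perm_mat_def)

lemma kron_one: "kron_mat (1\<^sub>m a) (1\<^sub>m b) = 1\<^sub>m (a * b)"
proof (rule eq_matI)
  fix i j assume "i < dim_row (1\<^sub>m (a * b) :: real mat)" "j < dim_col (1\<^sub>m (a * b) :: real mat)"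
  then have i: "i < a * b" and j: "j < a * b" by auto
  then have b0: "b > 0" by (cases b) auto
  have "i div b < a" "j div b < a" using i j by (auto simp: less_mult_imp_div_less)
  moreover have "(i div b = j div b \<and> i mod b = j mod b) \<longleftrightarrow> i = j"
    by (metis div_mult_mod_eq)
  ultimately show "kron_mat (1\<^sub>m a) (1\<^sub>m b) $$ (i, j) = 1\<^sub>m (a * b) $$ (i, j)"
    using i j b0 by (auto simp: kron_mat_index)
qed auto

lemma smult_smult_m: "a \<cdot>\<^sub>m (b \<cdot>\<^sub>m (A :: real mat)) = (a * b) \<cdot>\<^sub>m A"
  by (rule eq_matI) auto

lemma psi_comp:
  assumes p: "\<mu> permutes {1..n}" "\<sigma> permutes {1..n}" and k: "\<kappa> > 0"
  shows "psi n \<kappa> (\<mu> \<circ> \<sigma>) = psi n \<kappa> \<mu> * psi n \<kappa> \<sigma>"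
proof -
  have sg: "sign (\<mu> \<circ> \<sigma>) = sign \<mu> * sign \<sigma>"
    using p by (intro sign_compose) (auto intro: permutes_imp_permutation)
  note Tm = T_props(1)[OF p(1) k] and Ts = T_props(1)[OF p(2) k]
  have sTm: "of_int (sign \<mu>) \<cdot>\<^sub>m T_mat n \<kappa> \<mu> \<in> carrier_mat (\<kappa> ^ n) (\<kappa> ^ n)" using Tm by simp
  have sTs: "of_int (sign \<sigma>) \<cdot>\<^sub>m T_mat n \<kappa> \<sigma> \<in> carrier_mat (\<kappa> ^ n) (\<kappa> ^ n)" using Ts by simp
  have "psi n \<kappa> \<mu> * psi n \<kappa> \<sigma> =
     kron_mat (perm_mat n \<mu> * perm_mat n \<sigma>)
       ((of_int (sign \<mu>) \<cdot>\<^sub>m T_mat n \<kappa> \<mu>) * (of_int (sign \<sigma>) \<cdot>\<^sub>m T_mat n \<kappa> \<sigma>))"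
    unfolding psi_def
    by (rule kron_mult[OF perm_mat_carrier sTm perm_mat_carrier sTs]) (use k in auto)
  also have "(of_int (sign \<mu>) \<cdot>\<^sub>m T_mat n \<kappa> \<mu>) * (of_int (sign \<sigma>) \<cdot>\<^sub>m T_mat n \<kappa> \<sigma>)
      = of_int (sign (\<mu> \<circ> \<sigma>)) \<cdot>\<^sub>m T_mat n \<kappa> (\<mu> \<circ> \<sigma>)"
    unfolding sg T_comp[OF p k] using Tm Ts
    by (simp add: mult_smult_assoc_mat[of _ "\<kappa>^n" "\<kappa>^n"] mult_smult_distrib[of _ "\<kappa>^n" "\<kappa>^n"] smult_smult_m mult.commute)
  finally show ?thesis unfolding psi_def perm_mat_comp[OF p] by simp
qed


lemma psi_id:
  assumes k: "\<kappa> > 0"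
  shows "psi n \<kappa> id = 1\<^sub>m (n * \<kappa> ^ n)"
proof -
  have e: "(1::real) \<cdot>\<^sub>m 1\<^sub>m (\<kappa> ^ n) = 1\<^sub>m (\<kappa> ^ n)" by (rule eq_matI) auto
  have "psi n \<kappa> id = kron_mat (1\<^sub>m n) ((1::real) \<cdot>\<^sub>m 1\<^sub>m (\<kappa> ^ n))"
    unfolding psi_def perm_mat_id T_id[OF k] sign_id by (simp only: of_int_1)
  then show ?thesis by (simp only: e kron_one)
qed

lemma psi_carrier:
  assumes "\<sigma> permutes {1..n}" "\<kappa> > 0"
  shows "psi n \<kappa> \<sigma> \<in> carrier_mat (n * \<kappa> ^ n) (n * \<kappa> ^ n)"
proof -
  have T: "dim_row (T_mat n \<kappa> \<sigma>) = \<kappa> ^ n" "dim_col (T_mat n \<kappa> \<sigma>) = \<kappa> ^ n"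
    using T_props(1)[OF assms] by auto
  have P: "dim_row (perm_mat n \<sigma>) = n" "dim_col (perm_mat n \<sigma>) = n" by (auto simp: perm_mat_def)
  show ?thesis by (rule carrier_matI) (simp_all only: psi_def kron_mat_dims index_smult_mat(2,3) T P)
qed

theorem proposition3p18:
  fixes n \<kappa> :: nat
  assumes "n \<ge> 2" and "\<kappa> \<ge> 1"
  shows "(\<forall>\<sigma>. \<sigma> permutes {1..n} \<longrightarrow>
            psi n \<kappa> \<sigma> \<in> carrier_mat (n * \<kappa> ^ n) (n * \<kappa> ^ n) \<and> invertible_mat (psi n \<kappa> \<sigma>))
       \<and> (\<forall>\<mu> \<sigma>. \<mu> permutes {1..n} \<longrightarrow> \<sigma> permutes {1..n} \<longrightarrow>
            psi n \<kappa> (\<mu> \<circ> \<sigma>) = psi n \<kappa> \<mu> * psi n \<kappa> \<sigma>)"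
proof -
  have k: "\<kappa> > 0" using assms by simp
  have inv: "invertible_mat (psi n \<kappa> \<sigma>)" if p: "\<sigma> permutes {1..n}" for \<sigma>
  proof -
    have pi: "Hilbert_Choice.inv \<sigma> permutes {1..n}" using p by (rule permutes_inv)
    have c1: "\<sigma> \<circ> Hilbert_Choice.inv \<sigma> = id" using p by (rule permutes_inv_o)
    have c2: "Hilbert_Choice.inv \<sigma> \<circ> \<sigma> = id" using p by (rule permutes_inv_o)
    have A: "psi n \<kappa> \<sigma> * psi n \<kappa> (Hilbert_Choice.inv \<sigma>) = 1\<^sub>m (n * \<kappa> ^ n)"
      using psi_comp[OF p pi k] c1 psi_id[OF k] by simp
    have B: "psi n \<kappa> (Hilbert_Choice.inv \<sigma>) * psi n \<kappa> \<sigma> = 1\<^sub>m (n * \<kappa> ^ n)"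
      using psi_comp[OF pi p k] c2 psi_id[OF k] by simp
    have c1: "dim_row (psi n \<kappa> \<sigma>) = n * \<kappa> ^ n" "dim_col (psi n \<kappa> \<sigma>) = n * \<kappa> ^ n"
      using psi_carrier[OF p k] by auto
    have c2: "dim_row (psi n \<kappa> (Hilbert_Choice.inv \<sigma>)) = n * \<kappa> ^ n"
      using psi_carrier[OF pi k] by auto
    show ?thesis unfolding invertible_mat_def inverts_mat_def square_mat.simps
      by (intro conjI exI[of _ "psi n \<kappa> (Hilbert_Choice.inv \<sigma>)"]) (simp_all only: c1 c2 A B)
  qed
  show ?thesis
  proof (intro conjI allI impI)
    fix \<sigma> assume p: "\<sigma> permutes {1..n}"
    show "psi n \<kappa> \<sigma> \<in> carrier_mat (n * \<kappa> ^ n) (n * \<kappa> ^ n)" by (rule psi_carrier[OF p k])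
    show "invertible_mat (psi n \<kappa> \<sigma>)" by (rule inv[OF p])
  next
    fix \<mu> \<sigma> assume "\<mu> permutes {1..n}" "\<sigma> permutes {1..n}"
    then show "psi n \<kappa> (\<mu> \<circ> \<sigma>) = psi n \<kappa> \<mu> * psi n \<kappa> \<sigma>" by (rule psi_comp[OF _ _ k])
  qed
qed

end
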